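(* Let $\mathbb{F}_q$ be a finite field of characteristic $p$. For every $u\in\mathbb{F}_q$ with $u^3\ne27$, $$\#\mathcal{J}_{\mathrm{H},u}=\begin{cases}1,& \text{if } (p=2\text{ and } u=0) \text{ or } p=3,\\ 4,& \text{if } q\equiv1\pmod3,\ p\ne2,\ A_u=0,\\ 6,& \text{if } q\equiv1\pmod3,\ p\ne2,\ B_u=0,\\ 12,& \text{if } q\equiv1\pmod3 \text{ and } A_uB_u\ne0,\\ 2,& \text{if } q\equiv2\pmod3 \text{ and not } (p=2 \text{ and } u=0).\end{cases}$$
   Context: For $u\in\mathbb{F}_q$ with $u^3\ne27$, the Hessian curve $E_{\mathrm{H},u}$ is the elliptic curve $X^3+Y^3+1=uXY$ over $\mathbb{F}_q$; its $j$-invariant is $j(E_{\mathrm{H},u})=\left(\frac{u(u^3+216)}{u^3-27}\right)^3$. Two elliptic curves are isomorphic over $\overline{\mathbb{F}}_q$ iff they have the same $j$-invariant. Define $\mathcal{J}_{\mathrm{H},u}=\{v\in\mathbb{F}_q: v^3\ne27,\ E_{\mathrm{H},u}\cong_{\overline{\mathbb{F}}_q}E_{\mathrm{H},v}\}$. For $p\ne3$ put $A_u=-u(u^3+216)/3$ and $B_u=(u^6-540u^3-5832)/27$ (for $p>3$, $E_{\mathrm{H},u}$ is birationally equivalent to $\tilde Y^2=\tilde X^3+A_u\tilde X+B_u$). *)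

theory Defs
  imports "HOL-Number_Theory.Number_Theory"
begin

text \<open>j-invariant of the Hessian curve X^3+Y^3+1 = uXY (for u^3 \<noteq> 27).\<close>
definition j_hess :: "'a::field \<Rightarrow> 'a" where
  "j_hess u = (u * (u ^ 3 + 216) / (u ^ 3 - 27)) ^ 3"

text \<open>The set J_{H,u}: Hessian parameters v with E_{H,v} isomorphic to E_{H,u}
  over the algebraic closure, i.e. with the same j-invariant.\<close>
definition J_hess :: "'a::field \<Rightarrow> 'a set" where
  "J_hess u = {v. v ^ 3 \<noteq> 27 \<and> j_hess v = j_hess u}"

definition A_hess :: "'a::field \<Rightarrow> 'a" where
  "A_hess u = - u * (u ^ 3 + 216) / 3"

definition B_hess :: "'a::field \<Rightarrow> 'a" where
  "B_hess u = (u ^ 6 - 540 * u ^ 3 - 5832) / 27"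

end

theory Submission
  imports Defs "HOL-Computational_Algebra.Polynomial"
begin


definition Fh :: "'a::field \<Rightarrow> 'a" where "Fh v = v*(v^3+216)/(v^3-27)"

lemma j_Fh: "j_hess v = (Fh v)^3" by (simp add: j_hess_def Fh_def)

lemma char_prime: "prime CHAR('a::{finite,field})"
  using prime_CHAR_semidom[where ?'a='a] finite_imp_CHAR_pos[where ?'a='a] by simp

lemma two_eq0: "((2::'a::{finite,field}) = 0) = (CHAR('a) = 2)"
proof -
  have "(2::'a) = of_nat 2" by simp
  hence "((2::'a) = 0) = (CHAR('a) dvd 2)" by (simp only: of_nat_eq_0_iff_char_dvd)
  also have "\<dots> = (CHAR('a) = 2)"
    using char_prime[where ?'a='a] primes_dvd_imp_eq[of "CHAR('a)" 2] by auto
  finally show ?thesis .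
qed

lemma three_eq0: "((3::'a::{finite,field}) = 0) = (CHAR('a) = 3)"
proof -
  have "(3::'a) = of_nat 3" by simp
  hence "((3::'a) = 0) = (CHAR('a) dvd 3)" by (simp only: of_nat_eq_0_iff_char_dvd)
  also have "\<dots> = (CHAR('a) = 3)"
    using char_prime[where ?'a='a] primes_dvd_imp_eq[of "CHAR('a)" 3] by auto
  finally show ?thesis .
qed

lemma card_mod3_char: "card (UNIV::'a::{finite,field} set) mod 3 \<noteq> 0 \<Longrightarrow> (3::'a) \<noteq> 0"
  using CHAR_dvd_CARD[where ?'a='a] three_eq0[where ?'a='a] by auto

lemma fermat_ff:
  fixes x :: "'a :: {finite,field}"
  shows   "x ^ card (UNIV :: 'a set) = x"
proof (cases "x = 0")
  case False
  have "x * (\<Prod>y\<in>UNIV-{0}. x * y) = x * x ^ (card (UNIV :: 'a set) - 1) * \<Prod>(UNIV-{0})"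
    by (simp add: prod.distrib mult_ac)
  also have "x * x ^ (card (UNIV :: 'a set) - 1) = x ^ Suc (card (UNIV :: 'a set) - 1)"
    by (subst power_Suc) auto
  also have "Suc (card (UNIV :: 'a set) - 1) = card (UNIV :: 'a set)"
    using finite_UNIV_card_ge_0[where ?'a = 'a] by simp
  also have "(\<Prod>y\<in>UNIV-{0}. x * y) = (\<Prod>y\<in>UNIV-{0}. y)"
    by (rule prod.reindex_bij_witness[of _ "\<lambda>y. y / x" "\<lambda>y. x * y"]) (use False in auto)
  finally show ?thesis
    by simp
qed (use finite_UNIV_card_ge_0[where ?'a = 'a] in auto)

lemma geom3: "((x::'a::comm_ring_1)^3 - 1) * (\<Sum>i<m. x^(3*i)) = x^(3*m) - 1"
  by (induction m) (simp_all add: algebra_simps power_add power_mult)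

lemma deg_h: "degree (\<Sum>i<Suc k. monom (1::'a::comm_ring_1) (3*i)) \<le> 3*k"
proof (induction k)
  case 0 thus ?case by (simp add: degree_monom_le)
next
  case (Suc k)
  have "degree (\<Sum>i<Suc k. monom (1::'a) (3*i)) \<le> 3 * Suc k" using Suc by simp
  moreover have "degree (monom (1::'a) (3 * Suc k)) \<le> 3 * Suc k" by (rule degree_monom_le)
  ultimately show ?case by (simp add: degree_add_le)
qed

lemma omega_ex:
  assumes "card (UNIV::'a::{finite,field} set) mod 3 = 1"
  shows "\<exists>w::'a. w^3 = 1 \<and> w \<noteq> 1"
proof (rule ccontr)
  assume H: "\<not> ?thesis"
  define q where "q = card (UNIV::'a set)"
  have q2: "q \<ge> 2"
  proof -
    have "{0,1} \<subseteq> (UNIV::'a set)" by simp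
    hence "card {0::'a,1} \<le> q" unfolding q_def by (intro card_mono) auto
    thus ?thesis by simp
  qed
  have "q mod 3 = 1" using assms unfolding q_def .
  hence "\<exists>k. q = 3*k+4" using q2 by presburger
  then obtain k where qk: "q = 3*k+4" by blast
  define h where "h = (\<Sum>i<Suc k. monom (1::'a) (3*i))"
  have ph: "poly h x = (\<Sum>i<Suc k. x^(3*i))" for x
    unfolding h_def by (simp add: poly_sum poly_monom)
  have roots: "UNIV - {0,1} \<subseteq> {x. poly h x = 0}"
  proof
    fix x :: 'a assume x: "x \<in> UNIV - {0,1}"
    have "x ^ q = x" unfolding q_def by (rule fermat_ff)
    moreover have "q = Suc (3*Suc k)" using qk by simp
    ultimately have "x * x^(3*Suc k) = x * 1" by (simp only: power_Suc mult_1_right)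
    hence e: "x^(3*Suc k) = 1" using x by simp
    have "(x^3 - 1) * poly h x = 0" unfolding ph geom3 using e by simp
    moreover have "x^3 \<noteq> 1" using H x by auto
    ultimately show "x \<in> {x. poly h x = 0}" by simp
  qed
  have "h \<noteq> 0"
  proof
    assume "h = 0"
    hence "poly h 0 = 0" by simp
    moreover have "poly h 0 = 1" unfolding ph
      by (subst sum.lessThan_Suc_shift) (simp add: power_add)
    ultimately show False by simp
  qed
  hence "card {x. poly h x = 0} \<le> degree h" by (rule card_poly_roots_bound)
  also have "degree h \<le> 3*k" unfolding h_def by (rule deg_h)
  finally have c1: "card {x. poly h x = 0} \<le> 3*k" .
  have "card (UNIV - {0,1::'a}) \<le> card {x. poly h x = 0}"
    by (rule card_mono[OF _ roots]) simp
  moreover have "card (UNIV - {0,1::'a}) = q - 2" unfolding q_def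
    by (subst card_Diff_subset) auto
  ultimately show False using c1 qk by simp
qed



definition Qp :: "'a::field \<Rightarrow> 'a \<Rightarrow> 'a" where
  "Qp u v = (u^3-27)*(v*(v^3+216)) - u*(u^3+216)*(v^3-27)"
definition Lp :: "'a::field \<Rightarrow> 'a \<Rightarrow> 'a" where
  "Lp u v = (u-3)*v^2 - (u^2+18)*v + 3*u*(u+6)"
definition Rp :: "'a::field \<Rightarrow> 'a \<Rightarrow> 'a" where
  "Rp u v = (u^2+3*u+9)*v^2 + 3*(u^2+12*u-18)*v + 9*(u^2-6*u+36)"
definition Wp :: "'a::field \<Rightarrow> 'a \<Rightarrow> 'a" where
  "Wp u w = u^2 - 6*w*u - 18*w^2"
definition sig :: "'a::field \<Rightarrow> 'a" where
  "sig u = 3*(u+6)/(u-3)"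
definition tau :: "'a::field \<Rightarrow> 'a \<Rightarrow> 'a" where
  "tau u w = (3*w*u - 18*w - 18)/(u - 3*w)"

lemma Q_LR: "Qp u v = Lp u v * Rp u v"
  unfolding Qp_def Lp_def Rp_def by (Groebner_Basis.algebra)

lemma R_E: "Rp u v = (18+u*v)^2 + (18+u*v)*(3*u+3*v-18) + (3*u+3*v-18)^2"
  unfolding Rp_def by (Groebner_Basis.algebra)

lemma L_fact: "Lp u v = (v-u)*((u-3)*v - 3*(u+6))"
  unfolding Lp_def by (Groebner_Basis.algebra)

lemma n27: "(3::'a::field) \<noteq> 0 \<Longrightarrow> (27::'a) \<noteq> 0"
proof -
  assume h: "(3::'a) \<noteq> 0"
  have e: "(27::'a) = 3*3*3" by simp
  show ?thesis unfolding e mult_eq_0_iff using h by simp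
qed

lemma n243: "(3::'a::field) \<noteq> 0 \<Longrightarrow> (243::'a) \<noteq> 0"
proof -
  assume h: "(3::'a) \<noteq> 0"
  have e: "(243::'a) = 3*3*3*3*3" by simp
  show ?thesis unfolding e mult_eq_0_iff using h by simp
qed

lemma u3: "(u::'a::field)^3 \<noteq> 27 \<Longrightarrow> u \<noteq> 3"
  by auto

lemma F_eq_iff:
  assumes "u^3 \<noteq> 27" "(v::'a::field)^3 \<noteq> 27"
  shows "(Fh v = Fh u) = (Qp u v = 0)"
proof -
  have a: "v^3-27 \<noteq> 0" "u^3 - 27 \<noteq> 0" using assms by auto
  have q: "Qp u v = v*(v^3+216)*(u^3-27) - u*(u^3+216)*(v^3-27)" by (simp add: Qp_def mult_ac)
  show ?thesis unfolding Fh_def q eq_iff_diff_eq_0[symmetric] using frac_eq_eq[OF a] .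
qed

lemma Q_ok:
  assumes "(3::'a::field) \<noteq> 0" "u^3 \<noteq> 27" "Qp u v = 0"
  shows "(v::'a)^3 \<noteq> 27"
proof
  assume v: "v^3 = 27"
  have "(u^3-27)*(v*243) = 0" using assms(3) by (simp add: Qp_def v)
  moreover have "u^3-27 \<noteq> 0" using assms(2) by simp
  ultimately have "v*243 = 0" by (metis mult_eq_0_iff)
  hence "v = 0" using n243[OF assms(1)] by (metis mult_eq_0_iff)
  thus False using v n27[OF assms(1)] by simp
qed

lemma S_eq:
  assumes "(3::'a::field) \<noteq> 0" "u^3 \<noteq> 27"
  shows "{v. v^3 \<noteq> 27 \<and> Fh v = Fh u} = {v::'a. Lp u v = 0 \<or> Rp u v = 0}"
proof (intro equalityI subsetI)
  fix v assume "v \<in> {v. v^3 \<noteq> 27 \<and> Fh v = Fh u}"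
  hence "Qp u v = 0" using F_eq_iff[OF assms(2)] by auto
  thus "v \<in> {v::'a. Lp u v = 0 \<or> Rp u v = 0}" unfolding Q_LR by simp
next
  fix v assume "v \<in> {v::'a. Lp u v = 0 \<or> Rp u v = 0}"
  hence q: "Qp u v = 0" unfolding Q_LR by auto
  hence "v^3 \<noteq> 27" by (rule Q_ok[OF assms])
  thus "v \<in> {v. v^3 \<noteq> 27 \<and> Fh v = Fh u}" using F_eq_iff[OF assms(2)] q by auto
qed

lemma L_roots:
  assumes "(u::'a::field)^3 \<noteq> 27"
  shows "(Lp u v = 0) = (v = u \<or> v = sig u)"
proof -
  have nz: "u - 3 \<noteq> 0" using assms by auto
  have e1: "(v = sig u) = (v*(u-3) = 3*(u+6))" unfolding sig_def using nz by (simp add: eq_divide_eq)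
  have e2: "((u-3)*v - 3*(u+6) = 0) = (v*(u-3) = 3*(u+6))" by (simp add: right_minus_eq mult.commute)
  show ?thesis unfolding L_fact mult_eq_0_iff e1 e2[symmetric] by (simp add: right_minus_eq)
qed

lemma omega_fact:
  assumes "(w::'a::field)^2 + w + 1 = 0"
  shows "w^3 = 1" "(-1-w)^2 + (-1-w) + 1 = 0" "w * (-1-w) = 1"
  using assms by (Groebner_Basis.algebra)+

lemma u3_fact:
  assumes "(w::'a::field)^2 + w + 1 = 0"
  shows "u^3 - 27 = (u-3)*(u-3*w)*(u-3*(-1-w))"
  using assms by (Groebner_Basis.algebra)

lemma den_nz:
  assumes "(w::'a::field)^2 + w + 1 = 0" "u^3 \<noteq> 27"
  shows "u - 3 \<noteq> 0" "u - 3*w \<noteq> 0" "u - 3*(-1-w) \<noteq> 0"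
  using u3_fact[OF assms(1), of u] assms(2) by auto

lemma R_roots:
  assumes "(w::'a::field)^2 + w + 1 = 0" "u^3 \<noteq> 27"
  shows "(Rp u v = 0) = (v = tau u w \<or> v = tau u (-1-w))"
proof -
  have f: "Rp u v = ((18+u*v) - w*(3*u+3*v-18)) * ((18+u*v) - (-1-w)*(3*u+3*v-18))"
    unfolding R_E using assms(1) by (Groebner_Basis.algebra)
  have e1: "((18+u*v) - w*(3*u+3*v-18) = 0) = (v = tau u w)"
  proof -
    have id: "(18+u*v) - w*(3*u+3*v-18) = v*(u-3*w) - (3*w*u - 18*w - 18)" by (Groebner_Basis.algebra)
    have nz: "u-3*w \<noteq> 0" using den_nz[OF assms] by simp
    have "((18+u*v) - w*(3*u+3*v-18) = 0) = (v*(u-3*w) = (3*w*u - 18*w - 18))" unfolding id by (rule right_minus_eq)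
    also have "\<dots> = (v = (3*w*u - 18*w - 18) / (u-3*w))" using nz by (simp add: eq_divide_eq)
    finally show ?thesis unfolding tau_def .
  qed
  have e2: "((18+u*v) - (-1-w)*(3*u+3*v-18) = 0) = (v = tau u (-1-w))"
  proof -
    have id: "(18+u*v) - (-1-w)*(3*u+3*v-18) = v*(u-3*(-1-w)) - (3*(-1-w)*u - 18*(-1-w) - 18)" by (Groebner_Basis.algebra)
    have nz: "u-3*(-1-w) \<noteq> 0" using den_nz[OF assms] by simp
    have "((18+u*v) - (-1-w)*(3*u+3*v-18) = 0) = (v*(u-3*(-1-w)) = (3*(-1-w)*u - 18*(-1-w) - 18))" unfolding id by (rule right_minus_eq)
    also have "\<dots> = (v = (3*(-1-w)*u - 18*(-1-w) - 18) / (u-3*(-1-w)))" using nz by (simp add: eq_divide_eq)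
    finally show ?thesis unfolding tau_def .
  qed
  show ?thesis unfolding f using e1 e2 by simp
qed



lemma div_eq_div_iff0:
  assumes "b \<noteq> 0" "d \<noteq> 0"
  shows "((a::'a::field)/b = c/d) = (a*d - c*b = 0)"
  using frac_eq_eq[OF assms] by (simp add: right_minus_eq)

lemma eq_div_iff0:
  assumes "b \<noteq> 0"
  shows "((a::'a::field) = c/b) = (a*b - c = 0)"
  using assms by (simp add: eq_divide_eq right_minus_eq)

lemma w_ne1:
  assumes "(w::'a::field)^2 + w + 1 = 0" "(3::'a) \<noteq> 0"
  shows "w \<noteq> 1" "1 - w \<noteq> 0" "w - (-1-w) \<noteq> 0" "w \<noteq> 0" "-1-w \<noteq> 1" "-1-w \<noteq> 0"
proof -
  show "w \<noteq> 1" using assms by auto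
  thus "1 - w \<noteq> 0" by simp
  show "w - (-1-w) \<noteq> 0"
  proof
    assume "w - (-1-w) = 0"
    hence "(w - (-1-w))^2 = 0" by simp
    moreover have "(w - (-1-w))^2 = -3" using assms(1) by (Groebner_Basis.algebra)
    ultimately show False using assms(2) by simp
  qed
  show "w \<noteq> 0" using assms by auto
  show "-1-w \<noteq> 1"
  proof
    assume "-1-w = 1"
    hence "w = -1 - 1" by (metis add_diff_cancel_left' diff_add_cancel diff_diff_eq2 minus_diff_eq)
    hence "w^2 + w + 1 = (3::'a)" by (simp add: power2_eq_square)
    hence "(3::'a) = 0" using assms(1) by simp
    thus False using assms(2) by simp
  qed
  show "-1-w \<noteq> 0"
  proof
    assume "-1-w = 0"
    hence "(1::'a) = 0" using assms(1) by (Groebner_Basis.algebra)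
    thus False by simp
  qed
qed

lemma Wp1: "Wp u 1 = u^2 - 6*u - 18" by (simp add: Wp_def)

lemma eq_sig:
  assumes "(u::'a::field)^3 \<noteq> 27"
  shows "(u = sig u) = (Wp u 1 = 0)"
proof -
  have nz: "u - 3 \<noteq> 0" using assms by auto
  have "(u = sig u) = (u*(u-3) - 3*(u+6) = 0)" unfolding sig_def by (rule eq_div_iff0[OF nz])
  also have "u*(u-3) - 3*(u+6) = Wp u 1" unfolding Wp1 by (Groebner_Basis.algebra)
  finally show ?thesis .
qed

lemma eq_tau:
  assumes "(w::'a::field)^2 + w + 1 = 0" "u^3 \<noteq> 27"
  shows "(u = tau u w) = (Wp u w = 0)"
proof -
  have nz: "u - 3*w \<noteq> 0" using den_nz[OF assms] by simp
  have "(u = tau u w) = (u*(u-3*w) - (3*w*u - 18*w - 18) = 0)" unfolding tau_def by (rule eq_div_iff0[OF nz])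
  also have "u*(u-3*w) - (3*w*u - 18*w - 18) = Wp u w" unfolding Wp_def using assms(1) by (Groebner_Basis.algebra)
  finally show ?thesis .
qed

lemma sig_tau:
  assumes "(w::'a::field)^2 + w + 1 = 0" "u^3 \<noteq> 27" "(3::'a) \<noteq> 0"
  shows "(sig u = tau u w) = (Wp u (-1-w) = 0)"
proof -
  have nz: "u - 3 \<noteq> 0" "u - 3*w \<noteq> 0" using den_nz[OF assms(1,2)] by simp_all
  have "(sig u = tau u w) = (3*(u+6)*(u-3*w) - (3*w*u - 18*w - 18)*(u-3) = 0)"
    unfolding sig_def tau_def by (rule div_eq_div_iff0[OF nz])
  also have "3*(u+6)*(u-3*w) - (3*w*u - 18*w - 18)*(u-3) = (3*(1-w)) * Wp u (-1-w)"
    unfolding Wp_def using assms(1) by (Groebner_Basis.algebra)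
  finally show ?thesis using w_ne1[OF assms(1,3)] assms(3) by simp
qed

lemma tau_tau:
  assumes "(w::'a::field)^2 + w + 1 = 0" "u^3 \<noteq> 27" "(3::'a) \<noteq> 0"
  shows "(tau u w = tau u (-1-w)) = (Wp u 1 = 0)"
proof -
  have nz: "u - 3*w \<noteq> 0" "u - 3*(-1-w) \<noteq> 0" using den_nz[OF assms(1,2)] by simp_all
  have "(tau u w = tau u (-1-w)) = ((3*w*u - 18*w - 18)*(u-3*(-1-w)) - (3*(-1-w)*u - 18*(-1-w) - 18)*(u-3*w) = 0)"
    unfolding tau_def by (rule div_eq_div_iff0[OF nz])
  also have "(3*w*u - 18*w - 18)*(u-3*(-1-w)) - (3*(-1-w)*u - 18*(-1-w) - 18)*(u-3*w) = (3*(w-(-1-w))) * Wp u 1"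
    unfolding Wp1 by (Groebner_Basis.algebra)
  finally have e: "(tau u w = tau u (-1-w)) = ((3*(w-(-1-w))) * Wp u 1 = 0)" .
  have k: "3*(w-(-1-w)) \<noteq> 0" using w_ne1[OF assms(1,3)] assms(3) by (simp only: mult_eq_0_iff) simp
  show ?thesis unfolding e using k by (simp only: mult_eq_0_iff simp_thms)
qed

lemma W_diff:
  assumes "(u::'a::field)^3 \<noteq> 27" "(a::'a)^3 = 1" "b^3 = 1" "a + b + c = 0" "c^3 = 1"
    "a \<noteq> b" "(6::'a) \<noteq> 0" "Wp u a = 0" "Wp u b = 0"
  shows False
proof -
  have "Wp u a - Wp u b = -6*(a-b)*(u + 3*(a+b))" unfolding Wp_def by (Groebner_Basis.algebra)
  hence "u + 3*(a+b) = 0" using assms(6,7,8,9) by simp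
  hence "u = 3*c" using assms(4) by (Groebner_Basis.algebra)
  hence "u^3 = 27 * c^3" by (simp add: power_mult_distrib)
  thus False using assms(1,5) by simp
qed

lemma B_fact:
  assumes "(w::'a::field)^2 + w + 1 = 0" "(3::'a) \<noteq> 0"
  shows "B_hess u = Wp u 1 * Wp u w * Wp u (-1-w) / 27"
proof -
  have "u ^ 6 - 540 * u ^ 3 - 5832 = Wp u 1 * Wp u w * Wp u (-1-w)"
    unfolding Wp1 unfolding Wp_def using assms(1) by (Groebner_Basis.algebra)
  thus ?thesis unfolding B_hess_def by simp
qed

lemma S_omega:
  assumes "(w::'a::field)^2 + w + 1 = 0" "u^3 \<noteq> 27" "(3::'a) \<noteq> 0"
  shows "{v. v^3 \<noteq> 27 \<and> Fh v = Fh u} = {u, sig u, tau u w, tau u (-1-w)}"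
  unfolding S_eq[OF assms(3,2)] using L_roots[OF assms(2)] R_roots[OF assms(1,2)] by auto

lemma card_S_4:
  assumes "(w::'a::field)^2 + w + 1 = 0" "u^3 \<noteq> 27" "(3::'a) \<noteq> 0"
    "Wp u 1 \<noteq> 0" "Wp u w \<noteq> 0" "Wp u (-1-w) \<noteq> 0"
  shows "card {v. v^3 \<noteq> 27 \<and> Fh v = Fh u} = 4"
proof -
  have w': "(-1-w)^2 + (-1-w) + 1 = 0" using omega_fact[OF assms(1)] by simp
  have ww: "-1-(-1-w) = w" by simp
  have d1: "u \<noteq> sig u" using eq_sig[OF assms(2)] assms(4) by simp
  have d2: "u \<noteq> tau u w" using eq_tau[OF assms(1,2)] assms(5) by simp
  have d3: "u \<noteq> tau u (-1-w)" using eq_tau[OF w' assms(2)] assms(6) by simp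
  have d4: "sig u \<noteq> tau u w" using sig_tau[OF assms(1,2,3)] assms(6) by simp
  have d5: "sig u \<noteq> tau u (-1-w)" using sig_tau[OF w' assms(2,3)] assms(5) unfolding ww by simp
  have d6: "tau u w \<noteq> tau u (-1-w)" using tau_tau[OF assms(1,2,3)] assms(4) by simp
  show ?thesis unfolding S_omega[OF assms(1,2,3)] using d1 d2 d3 d4 d5 d6 by simp
qed



lemma card_S_2:
  assumes w: "(w::'a::field)^2 + w + 1 = 0" and u: "u^3 \<noteq> 27" and t: "(3::'a) \<noteq> 0" and s: "(6::'a) \<noteq> 0"
    and z: "Wp u 1 * Wp u w * Wp u (-1-w) = 0"
  shows "card {v. v^3 \<noteq> 27 \<and> Fh v = Fh u} = 2"
proof -
  have w': "(-1-w)^2 + (-1-w) + 1 = 0" using omega_fact[OF w] by simp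
  have ww: "-1-(-1-w) = w" by simp
  have c1: "(1::'a)^3 = 1" by simp
  have cw: "w^3 = 1" using omega_fact[OF w] by simp
  have cw': "(-1-w)^3 = 1" using omega_fact[OF w'] by simp
  have n1: "1 \<noteq> w" "1 \<noteq> -1-w" "w \<noteq> -1-w" using w_ne1[OF w t] by (auto simp: right_minus_eq)
  have x1: "\<not> (Wp u 1 = 0 \<and> Wp u w = 0)"
    using W_diff[OF u c1 cw _ cw' n1(1) s] by auto
  have x2: "\<not> (Wp u 1 = 0 \<and> Wp u (-1-w) = 0)"
    using W_diff[OF u c1 cw' _ cw n1(2) s] by auto
  have x3: "\<not> (Wp u w = 0 \<and> Wp u (-1-w) = 0)"
    using W_diff[OF u cw cw' _ c1 n1(3) s] by auto
  have S: "{v. v^3 \<noteq> 27 \<and> Fh v = Fh u} = {u, sig u, tau u w, tau u (-1-w)}"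
    by (rule S_omega[OF w u t])
  consider "Wp u 1 = 0" | "Wp u w = 0" | "Wp u (-1-w) = 0" using z by auto
  thus ?thesis
  proof cases
    case 1
    hence a: "u = sig u" "tau u w = tau u (-1-w)" using eq_sig[OF u] tau_tau[OF w u t] by auto
    have b: "u \<noteq> tau u w" using eq_tau[OF w u] x1 1 by auto
    show ?thesis unfolding S using a b by (simp add: insert_commute)
  next
    case 2
    hence a: "u = tau u w" "sig u = tau u (-1-w)" using eq_tau[OF w u] sig_tau[OF w' u t] unfolding ww by auto
    have b: "u \<noteq> sig u" using eq_sig[OF u] x1 2 by auto
    show ?thesis unfolding S using a b by (auto simp: insert_commute)
  next
    case 3
    hence a: "u = tau u (-1-w)" "sig u = tau u w" using eq_tau[OF w' u] sig_tau[OF w u t] by auto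
    have b: "u \<noteq> sig u" using eq_sig[OF u] x2 3 by auto
    show ?thesis unfolding S using a b by (auto simp: insert_commute)
  qed
qed

lemma cube_diff:
  assumes "(w::'a::field)^2 + w + 1 = 0"
  shows "x^3 - y^3 = (x-y)*(x-w*y)*(x-(-1-w)*y)"
  using assms by (Groebner_Basis.algebra)

lemma Fh_mul:
  assumes "(c::'a::field)^3 = 1"
  shows "Fh (c*x) = c * Fh x" "(c*x)^3 = x^3"
  using assms by (simp_all add: Fh_def power_mult_distrib)

lemma Sc_image:
  assumes "(c::'a::field)^3 = 1"
  shows "{v. v^3 \<noteq> 27 \<and> Fh v = c * Fh u} = (\<lambda>x. c*x) ` {v. v^3 \<noteq> 27 \<and> Fh v = Fh u}"
proof (intro equalityI subsetI)
  fix v assume v: "v \<in> {v. v^3 \<noteq> 27 \<and> Fh v = c * Fh u}"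
  have c2: "(c^2)^3 = 1" using assms by (metis power_mult power_one mult.commute)
  have "Fh (c^2 * v) = c^2 * Fh v" by (rule Fh_mul(1)[OF c2])
  also have "\<dots> = c^3 * Fh u" using v by (simp add: power2_eq_square power3_eq_cube mult_ac)
  finally have f: "Fh (c^2*v) = Fh u" using assms by simp
  have g: "(c^2*v)^3 \<noteq> 27" using Fh_mul(2)[OF c2] v by simp
  have "v = c * (c^2*v)" using assms by (simp add: power3_eq_cube power2_eq_square mult_ac)
  thus "v \<in> (\<lambda>x. c*x) ` {v. v^3 \<noteq> 27 \<and> Fh v = Fh u}" using f g by blast
next
  fix v assume "v \<in> (\<lambda>x. c*x) ` {v. v^3 \<noteq> 27 \<and> Fh v = Fh u}"
  then obtain x where x: "v = c*x" "x^3 \<noteq> 27" "Fh x = Fh u" by blast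
  show "v \<in> {v. v^3 \<noteq> 27 \<and> Fh v = c * Fh u}" using x Fh_mul[OF assms, of x] by simp
qed

lemma J_def2: "J_hess u = {v. v^3 \<noteq> 27 \<and> (Fh v)^3 = (Fh u)^3}"
  unfolding J_hess_def j_Fh ..

lemma J_omega:
  assumes w: "(w::'a::{finite,field})^2 + w + 1 = 0" and t: "(3::'a) \<noteq> 0" and F: "Fh (u::'a) \<noteq> 0"
  shows "card (J_hess u) = 3 * card {v. v^3 \<noteq> 27 \<and> Fh v = Fh u}"
proof -
  define S where "S c = {v. v^3 \<noteq> 27 \<and> Fh v = c * Fh u}" for c
  have w': "(-1-w)^2 + (-1-w) + 1 = 0" using omega_fact[OF w] by simp
  have cw: "w^3 = 1" using omega_fact[OF w] by simp
  have cw': "(-1-w)^3 = 1" using omega_fact[OF w'] by simp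
  have n1: "1 \<noteq> w" "1 \<noteq> -1-w" "w \<noteq> -1-w" "w \<noteq> 0" "-1-w \<noteq> 0"
    using w_ne1[OF w t] by (auto simp: right_minus_eq)
  have S1: "S 1 = {v. v^3 \<noteq> 27 \<and> Fh v = Fh u}" unfolding S_def by simp
  have J: "J_hess u = S 1 \<union> S w \<union> S (-1-w)"
  proof -
    have "((Fh v)^3 = (Fh u)^3) = (Fh v = 1 * Fh u \<or> Fh v = w * Fh u \<or> Fh v = (-1-w) * Fh u)" for v
    proof -
      have "((Fh v)^3 = (Fh u)^3) = ((Fh v)^3 - (Fh u)^3 = 0)" by (simp add: right_minus_eq)
      also have "\<dots> = (Fh v = 1 * Fh u \<or> Fh v = w * Fh u \<or> Fh v = (-1-w) * Fh u)"
        unfolding cube_diff[OF w] by (simp add: right_minus_eq)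
      finally show ?thesis .
    qed
    thus ?thesis unfolding J_def2 S_def by auto
  qed
  have disj: "S a \<inter> S b = {}" if "a \<noteq> b" for a b
  proof -
    have "a * Fh u \<noteq> b * Fh u" using that F by simp
    thus ?thesis unfolding S_def by auto
  qed
  have card_c: "card (S c) = card (S 1)" if "c^3 = 1" "c \<noteq> 0" for c
  proof -
    have "S c = (\<lambda>x. c*x) ` S 1" unfolding S1 unfolding S_def by (rule Sc_image[OF that(1)])
    moreover have "inj_on (\<lambda>x. c*x) (S 1)" using that(2) by (auto simp: inj_on_def)
    ultimately show ?thesis by (simp add: card_image)
  qed
  have "card (J_hess u) = card (S 1 \<union> S w) + card (S (-1-w))"
    unfolding J by (rule card_Un_disjoint) (use disj[OF n1(2)] disj[OF n1(3)] in auto)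
  also have "card (S 1 \<union> S w) = card (S 1) + card (S w)"
    by (rule card_Un_disjoint) (use disj[OF n1(1)] in auto)
  finally show ?thesis using card_c[OF cw n1(4)] card_c[OF cw' n1(5)] S1 by simp
qed



lemma card4: "a \<noteq> b \<Longrightarrow> a \<noteq> c \<Longrightarrow> a \<noteq> d \<Longrightarrow> b \<noteq> c \<Longrightarrow> b \<noteq> d \<Longrightarrow> c \<noteq> d \<Longrightarrow> card {a,b,c,d} = 4"
  by simp

lemma neg6: "(6::'a::field) \<noteq> 0 \<Longrightarrow> x \<noteq> y \<Longrightarrow> -(6*x) \<noteq> -(6*(y::'a))"
  by simp

lemma zero6: "(6::'a::field) \<noteq> 0 \<Longrightarrow> x \<noteq> 0 \<Longrightarrow> 0 \<noteq> -(6*(x::'a))"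
  by simp

lemma J_F0:
  assumes w: "(w::'a::field)^2 + w + 1 = 0" and t: "(3::'a) \<noteq> 0" and two: "(2::'a) \<noteq> 0"
    and F: "Fh (u::'a) = 0"
  shows "card (J_hess u) = 4"
proof -
  have w': "(-1-w)^2 + (-1-w) + 1 = 0" using omega_fact[OF w] by simp
  have cw: "w^3 = 1" using omega_fact[OF w] by simp
  have cw': "(-1-w)^3 = 1" using omega_fact[OF w'] by simp
  have n1: "1 \<noteq> w" "1 \<noteq> -1-w" "w \<noteq> -1-w" "w \<noteq> 0" "-1-w \<noteq> 0"
    using w_ne1[OF w t] by (auto simp: right_minus_eq)
  have six: "(6::'a) \<noteq> 0"
  proof -
    have e: "(6::'a) = 2*3" by simp
    show ?thesis unfolding e mult_eq_0_iff using t two by simp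
  qed
  have fac: "v^3 + 216 = (v+6*1)*(v+6*w)*(v+6*(-1-w))" for v :: 'a
    using w by (Groebner_Basis.algebra)
  have c27: "(27::'a) \<noteq> 0" by (rule n27[OF t])
  have c243: "(243::'a) \<noteq> 0" by (rule n243[OF t])
  have J0: "J_hess u = {v. v^3 \<noteq> 27 \<and> Fh v = 0}"
    unfolding J_def2 F by simp
  have J1: "J_hess u = {v. v^3 \<noteq> 27 \<and> v*(v^3+216) = 0}"
    unfolding J0 by (auto simp: Fh_def)
  have ok: "v^3 \<noteq> 27" if "v*(v^3+216) = 0" for v :: 'a
  proof
    assume v: "v^3 = 27"
    hence "v \<noteq> 0" using c27 by auto
    hence "v^3 + 216 = 0" using that by simp
    hence "(243::'a) = 0" using v by simp
    thus False using c243 by simp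
  qed
  have "{v. v^3 \<noteq> 27 \<and> v*(v^3+216) = 0} = {v::'a. v*(v^3+216) = 0}" using ok by auto
  also have "\<dots> = {0, -(6*1), -(6*w), -(6*(-1-w))}"
  proof -
    have e: "(v + 6*c = 0) = (v = -(6*c))" for v c :: 'a by (rule add_eq_0_iff2)
    show ?thesis unfolding fac mult_eq_0_iff e by blast
  qed
  finally have J: "J_hess u = {0, -(6*1), -(6*w), -(6*(-1-w))}" unfolding J1 .
  show "card (J_hess u) = 4" unfolding J
  proof (rule card4)
    show "0 \<noteq> -(6*1::'a)" by (rule zero6[OF six]) simp
    show "0 \<noteq> -(6*w)" by (rule zero6[OF six]) (use n1 in simp)
    show "0 \<noteq> -(6*(-1-w))" by (rule zero6[OF six]) (use n1 in simp)
    show "-(6*1) \<noteq> -(6*w)" by (rule neg6[OF six]) (use n1 in simp)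
    show "-(6*1) \<noteq> -(6*(-1-w))" by (rule neg6[OF six]) (use n1 in simp)
    show "-(6*w) \<noteq> -(6*(-1-w))" by (rule neg6[OF six]) (use n1 in simp)
  qed
qed

lemma cube_inj:
  assumes "card (UNIV::'a::{finite,field} set) mod 3 = 2" "(x::'a)^3 = y^3"
  shows "x = y"
proof (cases "y = 0")
  case True thus ?thesis using assms by simp
next
  case False
  define z where "z = x / y"
  have z3: "z^3 = 1" unfolding z_def using assms False by (simp add: power_divide)
  have "\<exists>m. card (UNIV::'a set) = 3*m + 2" using assms(1) by presburger
  then obtain m where q: "card (UNIV::'a set) = 3*m + 2" by blast
  have f: "z^(card (UNIV::'a set)) = z" by (rule fermat_ff)
  have g: "z^(3*m+2) = z" by (simp only: q[symmetric] f)
  have "z^(3*m+2) = (z^3)^m * z^2" by (simp only: power_add power_mult)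
  hence "(z^3)^m * z^2 = z" using g by simp
  hence "z * z = z" using z3 by (simp add: power2_eq_square)
  moreover have "z \<noteq> 0" using z3 by auto
  ultimately have "z = 1" by simp
  thus ?thesis unfolding z_def using False by simp
qed

lemma no_omega:
  assumes "card (UNIV::'a::{finite,field} set) mod 3 = 2" "(w::'a)^2 + w + 1 = 0"
  shows False
proof -
  have "(3::'a) \<noteq> 0" using card_mod3_char[where ?'a='a] assms(1) by simp
  moreover have "w^3 = 1^3" using omega_fact[OF assms(2)] by simp
  hence "w = 1" using cube_inj[OF assms(1)] by blast
  ultimately show False using assms(2) by simp
qed

lemma R_root_omega:
  assumes t: "(3::'a::field) \<noteq> 0" and W: "Wp (u::'a) 1 \<noteq> 0" and R: "Rp u v = 0"
  shows "\<exists>w::'a. w^2 + w + 1 = 0"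
proof -
  define a where "a = 18 + u*v"
  define b where "b = 3*u+3*v-18"
  have E: "a^2 + a*b + b^2 = 0" using R unfolding R_E a_def b_def .
  show ?thesis
  proof (cases "b = 0")
    case True
    hence "a = 0" using E by simp
    hence "u*v = -18" unfolding a_def by (simp add: eq_neg_iff_add_eq_0 add.commute)
    moreover have "3*(u+v-6) = b" unfolding b_def by (simp add: algebra_simps)
    hence "3*(u+v-6) = 0" using True by simp
    hence "u+v-6 = 0" using t by (simp only: mult_eq_0_iff) simp
    hence "v = 6 - u" by (simp add: algebra_simps)
    ultimately have "u*(6-u) = -18" by simp
    hence "Wp u 1 = 0" unfolding Wp1 by (simp add: algebra_simps power2_eq_square)
    thus ?thesis using W by simp
  next
    case False
    have "(a/b)^2 + a/b + 1 = (a^2 + a*b + b^2)/b^2" using False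
      by (simp add: field_simps power2_eq_square)
    thus ?thesis using E by auto
  qed
qed



lemma q2_card:
  assumes q: "card (UNIV::'a::{finite,field} set) mod 3 = 2" and u: "(u::'a)^3 \<noteq> 27"
    and nz: "\<not> (CHAR('a) = 2 \<and> u = 0)"
  shows "card (J_hess u) = 2"
proof -
  have t: "(3::'a) \<noteq> 0" using card_mod3_char[where ?'a='a] q by simp
  have J: "J_hess u = {v. v^3 \<noteq> 27 \<and> Fh v = Fh u}"
    unfolding J_def2 using cube_inj[OF q] by metis
  have S: "J_hess u = {v. Lp u v = 0 \<or> Rp u v = 0}" unfolding J by (rule S_eq[OF t u])
  show ?thesis
  proof (cases "Wp u 1 = 0")
    case False
    have "Rp u v \<noteq> 0" for v
    proof
      assume "Rp u v = 0"
      then obtain w :: 'a where "w^2 + w + 1 = 0" using R_root_omega[OF t False] by blast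
      thus False using no_omega[OF q] by blast
    qed
    hence "J_hess u = {u, sig u}" unfolding S using L_roots[OF u] by auto
    moreover have "u \<noteq> sig u" using eq_sig[OF u] False by simp
    ultimately show ?thesis by simp
  next
    case True
    have two: "(2::'a) \<noteq> 0"
    proof
      assume h: "(2::'a) = 0"
      hence "CHAR('a) = 2" using two_eq0[where ?'a='a] by simp
      hence u0: "u \<noteq> 0" using nz by simp
      have e6: "(6::'a) = 2*3" "(18::'a) = 2*9" by simp_all
      have "Wp u 1 = u^2" unfolding Wp1 e6 h by simp
      thus False using True u0 by simp
    qed
    define al where "al = u^2+3*u+9"
    define be where "be = 3*(u^2+12*u-18)"
    have "(u-3)*al = u^3-27" unfolding al_def by (Groebner_Basis.algebra)
    hence al0: "al \<noteq> 0" using u by auto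
    have iden: "4*al*Rp u v = (2*al*v+be)^2 + 27*(Wp u 1)^2" for v
      unfolding al_def be_def Rp_def Wp1 by (Groebner_Basis.algebra)
    have four: "(4::'a) \<noteq> 0"
    proof -
      have e: "(4::'a) = 2*2" by simp
      show ?thesis unfolding e mult_eq_0_iff using two by simp
    qed
    define r where "r = (-be)/(2*al)"
    have Rr: "(Rp u v = 0) = (v = r)" for v
    proof -
      have "(Rp u v = 0) = (4*al*Rp u v = 0)" using four al0 by simp
      also have "\<dots> = (2*al*v+be = 0)" unfolding iden True by simp
      also have "\<dots> = (2*al*v = -be)" by (rule add_eq_0_iff2)
      also have "\<dots> = (v*(2*al) = -be)" by (simp only: mult.commute)
      also have "\<dots> = (v = r)" unfolding r_def using two al0
        by (simp only: nonzero_eq_divide_eq[symmetric] mult_eq_0_iff de_Morgan_disj not_False_eq_True simp_thms)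
      finally show ?thesis .
    qed
    have su: "sig u = u" using eq_sig[OF u] True by simp
    have J2: "J_hess u = {u, r}" unfolding S using L_roots[OF u] Rr su by auto
    have "u \<noteq> r"
    proof
      assume "u = r"
      hence "Rp u u = 0" using Rr by simp
      hence "(2*al*u+be)^2 = 0" using iden[of u] True by simp
      hence z: "2*al*u+be = 0" by simp
      have "108*(2*u+3) = (2*al*u+be) - (2*u+21)*Wp u 1"
        unfolding al_def be_def Wp1 by (Groebner_Basis.algebra)
      hence "108*(2*u+3) = 0" using z True by simp
      moreover have "(108::'a) \<noteq> 0"
      proof -
        have e: "(108::'a) = 4*27" by simp
        show ?thesis unfolding e mult_eq_0_iff using four n27[OF t] by simp
      qed
      ultimately have h: "2*u+3 = 0" by (simp only: mult_eq_0_iff) simp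
      have "27 = (2*u+3)*(2*u-15) - 4*Wp u 1" unfolding Wp1 by (Groebner_Basis.algebra)
      hence "(27::'a) = 0" using h True by simp
      thus False using n27[OF t] by simp
    qed
    thus ?thesis unfolding J2 by simp
  qed
qed

lemma char3:
  assumes c: "CHAR('a::{finite,field}) = 3" and u: "(u::'a)^3 \<noteq> 27"
  shows "card (J_hess u) = 1"
proof -
  have t: "(3::'a) = 0" using three_eq0[where ?'a='a] c by simp
  have e: "(27::'a) = 3*9" "(216::'a) = 3*72" by simp_all
  have z27: "(27::'a) = 0" and z216: "(216::'a) = 0" unfolding e t by simp_all
  have F: "Fh v = v" if "v^3 \<noteq> 0" for v :: 'a
  proof -
    have "v \<noteq> 0" using that by auto
    thus ?thesis unfolding Fh_def z27 z216 using that by simp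
  qed
  have u0: "u^3 \<noteq> 0" using u z27 by simp
  have "J_hess u = {u}"
  proof (intro equalityI subsetI)
    fix v assume "v \<in> J_hess u"
    hence v: "v^3 \<noteq> 0" "(Fh v)^3 = (Fh u)^3" unfolding J_def2 z27 by auto
    hence "v^3 = u^3" using F[OF v(1)] F[OF u0] by simp
    moreover have "(v-u)^3 = v^3 - u^3 - 3*v*u*(v-u)" by (Groebner_Basis.algebra)
    ultimately have "(v-u)^3 = 0" using t by simp
    thus "v \<in> {u}" by simp
  next
    fix v assume "v \<in> {u}"
    thus "v \<in> J_hess u" unfolding J_def2 using u by simp
  qed
  thus ?thesis by simp
qed

lemma char2u0:
  assumes c: "CHAR('a::{finite,field}) = 2"
  shows "card (J_hess (0::'a)) = 1"
proof -
  have t: "(2::'a) = 0" using two_eq0[where ?'a='a] c by simp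
  have e: "(27::'a) = 1 + 2*13" "(216::'a) = 2*108" by simp_all
  have z27: "(27::'a) = 1" and z216: "(216::'a) = 0" unfolding e t by simp_all
  have "J_hess (0::'a) = {0}"
  proof (intro equalityI subsetI)
    fix v assume "v \<in> J_hess (0::'a)"
    hence v: "v^3 \<noteq> 1" "(Fh v)^3 = 0" unfolding J_def2 z27 by (auto simp: Fh_def)
    hence "Fh v = 0" by simp
    hence "v * v^3 = 0" using v(1) unfolding Fh_def z27 z216 by simp
    thus "v \<in> {0}" by simp
  next
    fix v assume "v \<in> {0::'a}"
    thus "v \<in> J_hess (0::'a)" unfolding J_def2 z27 by simp
  qed
  thus ?thesis by simp
qed

lemma A_F:
  assumes t: "(3::'a::field) \<noteq> 0" and u: "(u::'a)^3 \<noteq> 27"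
  shows "(A_hess u = 0) = (Fh u = 0)"
proof -
  have "u^3 - 27 \<noteq> 0" using u by simp
  hence "(Fh u = 0) = (u*(u^3+216) = 0)" unfolding Fh_def by simp
  moreover have "(A_hess u = 0) = (u*(u^3+216) = 0)" unfolding A_hess_def using t by simp
  ultimately show ?thesis by simp
qed

lemma AB:
  assumes t: "(3::'a::field) \<noteq> 0" and two: "(2::'a) \<noteq> 0" and A: "A_hess (u::'a) = 0"
  shows "B_hess u \<noteq> 0"
proof -
  have z: "u*(u^3+216) = 0" using A t unfolding A_hess_def by simp
  have "(27::'a) \<noteq> 0" by (rule n27[OF t])
  hence B: "(B_hess u = 0) = (u ^ 6 - 540 * u ^ 3 - 5832 = 0)" unfolding B_hess_def by simp
  have e1: "(5832::'a) = 2*2*2*(3*3*3*3*3*3)" by simp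
  have e2: "(157464::'a) = 2*2*2*(3*3*3*3*3*3*3*3*3)" by simp
  have n1: "(5832::'a) \<noteq> 0" unfolding e1 mult_eq_0_iff using t two by simp
  have n2: "(157464::'a) \<noteq> 0" unfolding e2 mult_eq_0_iff using t two by simp
  show ?thesis
  proof (cases "u = 0")
    case True thus ?thesis unfolding B using n1 by simp
  next
    case False
    hence u3: "u^3 = -216" using z by (simp add: eq_neg_iff_add_eq_0)
    have "u ^ 6 - 540 * u ^ 3 - 5832 = (u^3)^2 - 540*u^3 - 5832" by (simp add: power_mult[symmetric])
    also have "\<dots> = 157464" unfolding u3 by simp
    finally show ?thesis unfolding B using n2 by simp
  qed
qed

lemma omega_of:
  assumes "(w::'a::field)^3 = 1" "w \<noteq> 1"
  shows "w^2 + w + 1 = 0"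
proof -
  have "(w-1)*(w^2+w+1) = w^3 - 1" by (Groebner_Basis.algebra)
  thus ?thesis using assms by simp
qed



theorem mainTheorem9:
  fixes u :: "'a::{finite, field}"
  assumes "u ^ 3 \<noteq> 27"
  shows "(((CHAR('a) = 2 \<and> u = 0) \<or> CHAR('a) = 3) \<longrightarrow> card (J_hess u) = 1)
    \<and> ((card (UNIV :: 'a set) mod 3 = 1 \<and> CHAR('a) \<noteq> 2 \<and> A_hess u = 0) \<longrightarrow> card (J_hess u) = 4)
    \<and> ((card (UNIV :: 'a set) mod 3 = 1 \<and> CHAR('a) \<noteq> 2 \<and> B_hess u = 0) \<longrightarrow> card (J_hess u) = 6)
    \<and> ((card (UNIV :: 'a set) mod 3 = 1 \<and> A_hess u * B_hess u \<noteq> 0) \<longrightarrow> card (J_hess u) = 12)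
    \<and> ((card (UNIV :: 'a set) mod 3 = 2 \<and> \<not> (CHAR('a) = 2 \<and> u = 0)) \<longrightarrow> card (J_hess u) = 2)"
proof (intro conjI impI)
  assume h: "(CHAR('a) = 2 \<and> u = 0) \<or> CHAR('a) = 3"
  thus "card (J_hess u) = 1" using char2u0[where ?'a='a] char3[OF _ assms] by auto
next
  assume h: "card (UNIV :: 'a set) mod 3 = 2 \<and> \<not> (CHAR('a) = 2 \<and> u = 0)"
  thus "card (J_hess u) = 2" using q2_card[OF _ assms] by blast
next
  assume h: "card (UNIV :: 'a set) mod 3 = 1 \<and> CHAR('a) \<noteq> 2 \<and> A_hess u = 0"
  have t: "(3::'a) \<noteq> 0" using card_mod3_char[where ?'a='a] h by simp
  have two: "(2::'a) \<noteq> 0" using two_eq0[where ?'a='a] h by simp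
  obtain w :: 'a where w: "w^3 = 1" "w \<noteq> 1" using omega_ex h by blast
  have w2: "w^2 + w + 1 = 0" by (rule omega_of[OF w])
  have F: "Fh u = 0" using A_F[OF t assms] h by simp
  show "card (J_hess u) = 4" by (rule J_F0[OF w2 t two F])
next
  assume h: "card (UNIV :: 'a set) mod 3 = 1 \<and> CHAR('a) \<noteq> 2 \<and> B_hess u = 0"
  have t: "(3::'a) \<noteq> 0" using card_mod3_char[where ?'a='a] h by simp
  have two: "(2::'a) \<noteq> 0" using two_eq0[where ?'a='a] h by simp
  have six: "(6::'a) \<noteq> 0"
  proof -
    have e: "(6::'a) = 2*3" by simp
    show ?thesis unfolding e mult_eq_0_iff using t two by simp
  qed
  obtain w :: 'a where w: "w^3 = 1" "w \<noteq> 1" using omega_ex h by blast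
  have w2: "w^2 + w + 1 = 0" by (rule omega_of[OF w])
  have "A_hess u \<noteq> 0" using AB[OF t two] h by blast
  hence F: "Fh u \<noteq> 0" using A_F[OF t assms] by simp
  have "B_hess u = 0" using h by simp
  hence e: "Wp u 1 * Wp u w * Wp u (-1-w) / 27 = 0" unfolding B_fact[OF w2 t] .
  have z: "Wp u 1 * Wp u w * Wp u (-1-w) = 0" using e n27[OF t] divide_eq_0_iff by metis
  show "card (J_hess u) = 6" using J_omega[OF w2 t F] card_S_2[OF w2 assms t six z] by simp
next
  assume h: "card (UNIV :: 'a set) mod 3 = 1 \<and> A_hess u * B_hess u \<noteq> 0"
  have t: "(3::'a) \<noteq> 0" using card_mod3_char[where ?'a='a] h by simp
  obtain w :: 'a where w: "w^3 = 1" "w \<noteq> 1" using omega_ex h by blast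
  have w2: "w^2 + w + 1 = 0" by (rule omega_of[OF w])
  have "A_hess u \<noteq> 0" using h by simp
  hence F: "Fh u \<noteq> 0" using A_F[OF t assms] by simp
  have "B_hess u \<noteq> 0" using h by simp
  hence "Wp u 1 * Wp u w * Wp u (-1-w) / 27 \<noteq> 0" using B_fact[OF w2 t, of u] by simp
  hence nz: "Wp u 1 \<noteq> 0" "Wp u w \<noteq> 0" "Wp u (-1-w) \<noteq> 0" by auto
  show "card (J_hess u) = 12" using J_omega[OF w2 t F] card_S_4[OF w2 assms t nz] by simp
qed


end
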